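(* Let $\mathcal I$ be a canonical instance with groups $G_1,\dots,G_k$, group weights $w_1>\cdots>w_k$, sizes $n_1,\dots,n_k$, $W_q=n_qw_q$, $L_1=0$ and $L_r=\sum_{q<r}W_q/w_r$ for $r\ge2$. Fix $i\in[k]$ and define the proxy cost $v^\star_i$ on items by $v^\star_i(e_h)=w_i$ if $h\le L_i+n_i$; $v^\star_i(e_h)=w_s$ if $L_i+n_i+\cdots+n_{s-1}<h\le L_i+n_i+\cdots+n_s$ for $s=i+1,\dots,k$; and $v^\star_i(e_h)=0$ if $h>L_i+n_i+\cdots+n_k$; extend additively. Let $a$ be any agent of group $G_i$ with cost function $v$, and let $d$ be the largest index $h$ with $v(e_h)>w_i$ (with $d=0$ if there is none). Then for every integer $t$ with $d<t\le m$, $$\sum_{h=d+1}^{t}v(e_h)\le\sum_{h=d+1}^{t}v^\star_i(e_h).$$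
   Context: Chore-allocation instance: agents, a finite set $\mathcal M=\{e_1,\dots,e_m\}$ of indivisible items, positive weights, additive cost functions $v:2^{\mathcal M}\to\mathbb R_{\ge0}$. The weighted maximin share of agent $a$ with weight $w_a$ and cost $v_a$ is $\mathsf{WMMS}_a=w_a\min_{\text{allocations }(B_b)_b}\max_{b}\frac{v_a(B_b)}{w_b}$, allocations being ordered partitions of $\mathcal M$ into one (possibly empty) bundle per agent. An instance is canonical if: (i) $\max$ weight is $w_1$, weights sum to $1$, and every weight equals $w_1/2^p$ for some nonnegative integer $p$; (ii) every agent's total cost $v(\mathcal M)=1$, and every single-item cost is either $0$ or $w_1/2^p$ for some nonnegative integer $p$; (iii) every agent has $v(e_1)\ge\cdots\ge v(e_m)$; (iv) every agent's $\mathsf{WMMS}$ equals her weight. Agents are partitioned into groups $G_1,\dots,G_k$ by weight, all agents of $G_i$ having weight $w_i$, with $w_1>\cdots>w_k$, and $n_i=|G_i|$. *)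

theory Defs
  imports Complex_Main "HOL-Library.FuncSet"
begin

text \<open>Agents form a finite set A (of an arbitrary type), items are e_1,...,e_m,
  represented by the natural numbers 1..m.
  An allocation is a map from items {1..m} to agents A (bundle of b = preimage of b).\<close>

definition bundle_cost :: "('ag \<Rightarrow> nat \<Rightarrow> real) \<Rightarrow> 'ag \<Rightarrow> nat \<Rightarrow> (nat \<Rightarrow> 'ag) \<Rightarrow> 'ag \<Rightarrow> real" where
  "bundle_cost v a m f b = (\<Sum>h\<in>{h\<in>{1..m}. f h = b}. v a h)"

definition WMMS :: "'ag set \<Rightarrow> ('ag \<Rightarrow> real) \<Rightarrow> ('ag \<Rightarrow> nat \<Rightarrow> real) \<Rightarrow> nat \<Rightarrow> 'ag \<Rightarrow> real" where
  "WMMS A w v m a = w a *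
     Min ((\<lambda>f. Max ((\<lambda>b. bundle_cost v a m f b / w b) ` A)) ` ({1..m} \<rightarrow>\<^sub>E A))"

definition canonical :: "'ag set \<Rightarrow> ('ag \<Rightarrow> real) \<Rightarrow> ('ag \<Rightarrow> nat \<Rightarrow> real) \<Rightarrow> nat \<Rightarrow> bool" where
  "canonical A w v m \<longleftrightarrow>
     finite A \<and> A \<noteq> {} \<and>
     (\<forall>a\<in>A. w a > 0) \<and>
     (\<forall>a\<in>A. \<forall>h\<in>{1..m}. v a h \<ge> 0) \<and>
     \<comment> \<open>(i)\<close>
     (\<Sum>a\<in>A. w a) = 1 \<and>
     (\<forall>a\<in>A. \<exists>p::nat. w a = Max (w ` A) / 2 ^ p) \<and>
     \<comment> \<open>(ii)\<close>
     (\<forall>a\<in>A. (\<Sum>h\<in>{1..m}. v a h) = 1) \<and>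
     (\<forall>a\<in>A. \<forall>h\<in>{1..m}. v a h = 0 \<or> (\<exists>p::nat. v a h = Max (w ` A) / 2 ^ p)) \<and>
     \<comment> \<open>(iii)\<close>
     (\<forall>a\<in>A. \<forall>h1\<in>{1..m}. \<forall>h2\<in>{1..m}. h1 \<le> h2 \<longrightarrow> v a h2 \<le> v a h1) \<and>
     \<comment> \<open>(iv)\<close>
     (\<forall>a\<in>A. WMMS A w v m a = w a)"

text \<open>Group data: gw 1 > ... > gw k are the distinct weights; group i = agents of weight gw i.\<close>

definition group_size :: "'ag set \<Rightarrow> ('ag \<Rightarrow> real) \<Rightarrow> (nat \<Rightarrow> real) \<Rightarrow> nat \<Rightarrow> nat" where
  "group_size A w gw q = card {a\<in>A. w a = gw q}"

definition Lval :: "'ag set \<Rightarrow> ('ag \<Rightarrow> real) \<Rightarrow> (nat \<Rightarrow> real) \<Rightarrow> nat \<Rightarrow> real" where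
  "Lval A w gw r = (\<Sum>q\<in>{1..<r}. real (group_size A w gw q) * gw q) / gw r"

definition cumul :: "'ag set \<Rightarrow> ('ag \<Rightarrow> real) \<Rightarrow> (nat \<Rightarrow> real) \<Rightarrow> nat \<Rightarrow> nat \<Rightarrow> real" where
  "cumul A w gw i s = Lval A w gw i + (\<Sum>q\<in>{i..s}. real (group_size A w gw q))"

definition vstar :: "'ag set \<Rightarrow> ('ag \<Rightarrow> real) \<Rightarrow> (nat \<Rightarrow> real) \<Rightarrow> nat \<Rightarrow> nat \<Rightarrow> nat \<Rightarrow> real" where
  "vstar A w gw k i h =
     (if real h \<le> cumul A w gw i i then gw i
      else if real h > cumul A w gw i k then 0
      else gw (THE s. s \<in> {i+1..k} \<and> cumul A w gw i (s-1) < real h \<and> real h \<le> cumul A w gw i s))"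

end

theory Submission
  imports Defs
begin

lemma sum_split_ivl:
  fixes g :: "nat \<Rightarrow> real"
  assumes "a \<le> b" "b \<le> c"
  shows "sum g {a+1..c} = sum g {a+1..b} + sum g {b+1..c}"
proof -
  have "{a+1..c} = {a+1..b} \<union> {b+1..c}" using assms by auto
  moreover have "{a+1..b} \<inter> {b+1..c} = {}" by auto
  ultimately show ?thesis by (simp add: sum.union_disjoint)
qed

lemma aux1: fixes x g \<theta> :: real shows "0 \<le> x \<Longrightarrow> x \<le> g \<Longrightarrow> 0 < g \<Longrightarrow> 0 \<le> \<theta> \<Longrightarrow> x - \<theta> \<le> x * (1 - \<theta>/g)"
  by (smt (verit, best) eq_divide_imp one_eq_divide_iff right_diff_distrib
    scaling_mono times_divide_eq_right)

lemma aux2: fixes x g \<theta> :: real shows "0 \<le> x \<Longrightarrow> \<theta> \<le> g \<Longrightarrow> 0 < g \<Longrightarrow> 0 \<le> x * (1 - \<theta>/g)"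
  by simp

locale setting =
  fixes A :: "'ag set" and w :: "'ag \<Rightarrow> real" and V :: "nat \<Rightarrow> real"
    and m k :: nat and gw :: "nat \<Rightarrow> real" and i :: nat and f :: "nat \<Rightarrow> 'ag" and Ln :: nat
  assumes finA: "finite A"
    and wpos: "\<And>b. b \<in> A \<Longrightarrow> w b > 0"
    and vnn: "\<And>h. h \<in> {1..m} \<Longrightarrow> V h \<ge> 0"
    and vmono: "\<And>h1 h2. h1 \<in> {1..m} \<Longrightarrow> h2 \<in> {1..m} \<Longrightarrow> h1 \<le> h2 \<Longrightarrow> V h2 \<le> V h1"
    and groups: "w ` A = gw ` {1..k}"
    and decr: "\<forall>p\<in>{1..k}. \<forall>q\<in>{1..k}. p < q \<longrightarrow> gw q < gw p"
    and i: "i \<in> {1..k}"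
    and fA: "\<And>h. h \<in> {1..m} \<Longrightarrow> f h \<in> A"
    and cost: "\<And>b. b \<in> A \<Longrightarrow> (\<Sum>h\<in>{h\<in>{1..m}. f h = b}. V h) \<le> w b"
    and Lnat: "Lval A w gw i = real Ln"
begin

abbreviation n where "n q \<equiv> group_size A w gw q"
definition d where "d = Max ({0} \<union> {h\<in>{1..m}. V h > gw i})"
definition T where "T s = Ln + (\<Sum>q\<in>{i..s}. n q)"

lemma gwpos: "q \<in> {1..k} \<Longrightarrow> gw q > 0"
proof -
  assume "q \<in> {1..k}"
  then have "gw q \<in> w ` A" using groups by auto
  then show ?thesis using wpos by auto
qed

lemma decr': "p \<in> {1..k} \<Longrightarrow> q \<in> {1..k} \<Longrightarrow> gw p \<le> gw q \<longleftrightarrow> q \<le> p"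
proof (cases rule: linorder_cases[of p q])
  case less
  assume "p \<in> {1..k}" "q \<in> {1..k}"
  then show ?thesis using decr less by force
next
  case greater
  assume "p \<in> {1..k}" "q \<in> {1..k}"
  then show ?thesis using decr greater by force
qed simp

lemma item_le: "h \<in> {1..m} \<Longrightarrow> V h \<le> w (f h)"
proof -
  assume h: "h \<in> {1..m}"
  have "V h \<le> (\<Sum>h'\<in>{h'\<in>{1..m}. f h' = f h}. V h')"
    by (rule member_le_sum) (use h vnn in auto)
  also have "\<dots> \<le> w (f h)" using cost fA h by auto
  finally show ?thesis .
qed

lemma d_le_m: "d \<le> m"
  unfolding d_def by (subst Max_le_iff) auto

lemma below_d: "h \<in> {1..m} \<Longrightarrow> h \<le> d \<Longrightarrow> V h > gw i"
proof -
  assume h: "h \<in> {1..m}" "h \<le> d"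
  then have "d \<noteq> 0" by auto
  have "d \<in> {0} \<union> {h\<in>{1..m}. V h > gw i}" unfolding d_def by (rule Max_in) auto
  then have "d \<in> {1..m}" "V d > gw i" using \<open>d \<noteq> 0\<close> by auto
  then show ?thesis using vmono[OF h(1) \<open>d \<in> {1..m}\<close> h(2)] by linarith
qed

lemma above_d: "h \<in> {1..m} \<Longrightarrow> d < h \<Longrightarrow> V h \<le> gw i"
proof (rule ccontr)
  assume h: "h \<in> {1..m}" "d < h" "\<not> V h \<le> gw i"
  then have "h \<le> d" unfolding d_def by (intro Max_ge) auto
  then show False using h by auto
qed

lemma group_sum:
  assumes Q: "Q \<subseteq> {1..k}"
  shows "(\<Sum>b\<in>{b\<in>A. w b \<in> gw ` Q}. \<phi> (w b)) = (\<Sum>q\<in>Q. real (n q) * \<phi> (gw q))"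
proof -
  have fQ: "finite Q" using Q finite_subset by blast
  have eq: "{b\<in>A. w b \<in> gw ` Q} = (\<Union>q\<in>Q. {b\<in>A. w b = gw q})" by auto
  have inj: "inj_on gw {1..k}"
    by (rule inj_onI) (metis decr linorder_neq_iff order_less_irrefl)
  have "(\<Sum>b\<in>{b\<in>A. w b \<in> gw ` Q}. \<phi> (w b)) = (\<Sum>q\<in>Q. \<Sum>b\<in>{b\<in>A. w b = gw q}. \<phi> (w b))"
    unfolding eq
  proof (rule sum.UNION_disjoint)
    show "finite Q" by fact
    show "\<forall>q\<in>Q. finite {b \<in> A. w b = gw q}" using finA by auto
    show "\<forall>q\<in>Q. \<forall>j\<in>Q. q \<noteq> j \<longrightarrow> {b \<in> A. w b = gw q} \<inter> {b \<in> A. w b = gw j} = {}"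
      using inj Q by auto (metis inj_onD subsetD)
  qed
  also have "\<dots> = (\<Sum>q\<in>Q. real (n q) * \<phi> (gw q))"
    by (rule sum.cong) (auto simp: group_size_def)
  finally show ?thesis .
qed

lemma set_ge: "s \<in> {1..k} \<Longrightarrow> {b\<in>A. w b \<ge> gw s} = {b\<in>A. w b \<in> gw ` {1..s}}"
proof -
  assume s: "s \<in> {1..k}"
  have "\<And>b. b \<in> A \<Longrightarrow> \<exists>q\<in>{1..k}. w b = gw q" using groups by auto
  then show ?thesis using s decr' by fastforce
qed

lemma set_mid: "s \<in> {1..k} \<Longrightarrow> {b\<in>A. gw s \<le> w b \<and> w b < gw i} = {b\<in>A. w b \<in> gw ` {i+1..s}}"
proof -
  assume s: "s \<in> {1..k}"
  have "\<And>b. b \<in> A \<Longrightarrow> \<exists>q\<in>{1..k}. w b = gw q" using groups by auto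
  then show ?thesis using s i decr' by (fastforce simp: not_le[symmetric])
qed

lemma regroup:
  "(\<Sum>h\<in>{h\<in>{1..m}. P (f h)}. g h) = (\<Sum>b\<in>{b\<in>A. P b}. \<Sum>h\<in>{h\<in>{1..m}. f h = b}. g h)"
proof -
  have "(\<Sum>b\<in>{b\<in>A. P b}. \<Sum>h\<in>{h\<in>{1..m}. f h = b}. g h)
     = (\<Sum>b\<in>{b\<in>A. P b}. \<Sum>h\<in>{h. h \<in> {h\<in>{1..m}. P (f h)} \<and> f h = b}. g h)"
    by (auto intro!: sum.cong)
  also have "\<dots> = (\<Sum>h\<in>{h\<in>{1..m}. P (f h)}. g h)"
    by (rule sum.group) (use finA fA in auto)
  finally show ?thesis by simp
qed

lemma big_sum: "t \<le> m \<Longrightarrow> (\<Sum>h\<in>{h\<in>{1..t}. gw i \<le> w (f h)}. V h) \<le> (Lval A w gw i + n i) * gw i"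
proof -
  assume t: "t \<le> m"
  have "(\<Sum>h\<in>{h\<in>{1..t}. gw i \<le> w (f h)}. V h) \<le> (\<Sum>h\<in>{h\<in>{1..m}. gw i \<le> w (f h)}. V h)"
    by (rule sum_mono2) (use t vnn in auto)
  also have "\<dots> = (\<Sum>b\<in>{b\<in>A. gw i \<le> w b}. \<Sum>h\<in>{h\<in>{1..m}. f h = b}. V h)"
    by (rule regroup)
  also have "\<dots> \<le> (\<Sum>b\<in>{b\<in>A. gw i \<le> w b}. w b)"
    by (rule sum_mono, rule cost) auto
  also have "\<dots> = (\<Sum>b\<in>{b\<in>A. w b \<in> gw ` {1..i}}. w b)" using set_ge[OF i] by simp
  also have "\<dots> = (\<Sum>q\<in>{1..i}. real (n q) * gw q)" using group_sum[of "{1..i}" "\<lambda>x. x"] i by auto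
  also have "\<dots> = (\<Sum>q\<in>{1..<i}. real (n q) * gw q) + real (n i) * gw i"
  proof -
    have "{1..i} = insert i {1..<i}" using i by auto
    then show ?thesis by simp
  qed
  also have "\<dots> = (Lval A w gw i + n i) * gw i"
    using gwpos[OF i] by (simp add: Lval_def field_simps)
  finally show ?thesis .
qed

lemma sum_d: "real d * gw i \<le> (\<Sum>h\<in>{1..d}. V h)"
proof -
  have "(\<Sum>h\<in>{1..d}. gw i) \<le> (\<Sum>h\<in>{1..d}. V h)"
    by (rule sum_mono) (use below_d d_le_m in \<open>auto intro: less_imp_le\<close>)
  then show ?thesis by simp
qed

lemma sum_d_big: "(\<Sum>h\<in>{1..d}. V h) = (\<Sum>h\<in>{h\<in>{1..d}. gw i \<le> w (f h)}. V h)"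
proof -
  have "{h\<in>{1..d}. gw i \<le> w (f h)} = {1..d}"
  proof safe
    fix h assume "h \<in> {1..d}"
    then have "h \<in> {1..m}" using d_le_m by auto
    then show "gw i \<le> w (f h)" using below_d item_le \<open>h \<in> {1..d}\<close> by force
  qed
  then show ?thesis by simp
qed

lemma d_le_Ti: "real d \<le> Lval A w gw i + n i"
proof -
  have "real d * gw i \<le> (Lval A w gw i + n i) * gw i"
    using sum_d sum_d_big big_sum[OF d_le_m] by linarith
  then show ?thesis using gwpos[OF i] by simp
qed

lemma bound:
  assumes s: "s \<in> {i..k}" and th: "0 \<le> \<theta>" "\<theta> \<le> gw s"
    and low: "\<forall>b\<in>A. w b < gw s \<longrightarrow> w b \<le> \<theta>" and t: "d \<le> t" "t \<le> m"
  shows "(\<Sum>h\<in>{d+1..t}. V h) \<le> \<theta> * (real t - real d) + (Lval A w gw i + n i - real d) * (gw i - \<theta>)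
           + (\<Sum>q\<in>{i+1..s}. real (n q) * (gw q - \<theta>))"
proof -
  define S where "S = {d+1..t}"
  have s1: "s \<in> {1..k}" using s i by auto
  have gwsi: "gw s \<le> gw i" using decr'[OF s1 i] s by auto
  have gi: "gw i > 0" using gwpos i by auto
  define big where "big b \<longleftrightarrow> gw i \<le> w b" for b
  define mid where "mid b \<longleftrightarrow> gw s \<le> w b \<and> w b < gw i" for b
  define c where "c = 1 - \<theta> / gw i"
  have c0: "c \<ge> 0" using th gwsi gi by (simp add: c_def)
  have pw: "V h \<le> \<theta> + (if big (f h) then V h * c else 0)
       + (if mid (f h) then V h * (1 - \<theta> / w (f h)) else 0)" if h: "h \<in> S" for h
  proof -
    have hm: "h \<in> {1..m}" using h t by (auto simp: S_def)
    have v1: "V h \<le> w (f h)" "V h \<le> gw i" "V h \<ge> 0" "w (f h) > 0"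
      using item_le[OF hm] above_d[OF hm] vnn[OF hm] wpos[OF fA[OF hm]] h by (auto simp: S_def)
    consider "big (f h)" | "mid (f h)" | "\<not> big (f h)" "\<not> mid (f h)" by blast
    then show ?thesis
    proof cases
      case 1
      then have "\<not> mid (f h)" by (auto simp: big_def mid_def)
      then show ?thesis using 1 aux1[of "V h" "gw i" \<theta>] v1 gi th by (simp add: c_def)
    next
      case 2
      then have "\<not> big (f h)" by (auto simp: big_def mid_def)
      then show ?thesis using 2 aux1[of "V h" "w (f h)" \<theta>] v1 th by simp
    next
      case 3
      then have "w (f h) < gw s" using gwsi by (auto simp: big_def mid_def)
      then have "w (f h) \<le> \<theta>" using low fA hm by auto
      then show ?thesis using 3 v1 by simp
    qed
  qed
  have "(\<Sum>h\<in>S. V h) \<le> (\<Sum>h\<in>S. \<theta> + (if big (f h) then V h * c else 0)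
       + (if mid (f h) then V h * (1 - \<theta> / w (f h)) else 0))"
    by (rule sum_mono) (rule pw)
  also have "\<dots> = (\<Sum>h\<in>S. \<theta>) + (\<Sum>h\<in>S. (if big (f h) then V h * c else 0))
       + (\<Sum>h\<in>S. (if mid (f h) then V h * (1 - \<theta> / w (f h)) else 0))"
    by (simp add: sum.distrib)
  finally have main: "(\<Sum>h\<in>S. V h) \<le> (\<Sum>h\<in>S. \<theta>) + (\<Sum>h\<in>S. (if big (f h) then V h * c else 0))
       + (\<Sum>h\<in>S. (if mid (f h) then V h * (1 - \<theta> / w (f h)) else 0))" .
  have e1: "(\<Sum>h\<in>S. \<theta>) = \<theta> * (real t - real d)" using t by (simp add: S_def of_nat_diff)
  have e2: "(\<Sum>h\<in>S. (if big (f h) then V h * c else 0)) \<le> (Lval A w gw i + n i - real d) * (gw i - \<theta>)"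
  proof -
    have "(\<Sum>h\<in>S. (if big (f h) then V h * c else 0)) = (\<Sum>h\<in>{h\<in>S. big (f h)}. V h * c)"
      by (rule sum.inter_filter[symmetric]) (simp add: S_def)
    also have "\<dots> = c * (\<Sum>h\<in>{h\<in>S. big (f h)}. V h)"
      by (simp add: sum_distrib_left mult.commute)
    finally have eqc: "(\<Sum>h\<in>S. (if big (f h) then V h * c else 0)) = c * (\<Sum>h\<in>{h\<in>S. big (f h)}. V h)" .
    have bb: "(\<Sum>h\<in>{h\<in>S. big (f h)}. V h) \<le> (Lval A w gw i + n i - real d) * gw i"
    proof -
      have un: "{h\<in>{1..t}. big (f h)} = {h\<in>{1..d}. big (f h)} \<union> {h\<in>S. big (f h)}"
        using t by (auto simp: S_def)
      have "(\<Sum>h\<in>{h\<in>{1..t}. big (f h)}. V h) = (\<Sum>h\<in>{h\<in>{1..d}. big (f h)}. V h) + (\<Sum>h\<in>{h\<in>S. big (f h)}. V h)"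
        unfolding un by (rule sum.union_disjoint) (auto simp: S_def)
      then show ?thesis using big_sum[OF t(2)] sum_d sum_d_big unfolding big_def
        by (simp add: algebra_simps)
    qed
    have "(\<Sum>h\<in>S. (if big (f h) then V h * c else 0)) \<le> c * ((Lval A w gw i + n i - real d) * gw i)"
      unfolding eqc using mult_left_mono[OF bb c0] .
    also have "\<dots> = (Lval A w gw i + n i - real d) * (gw i - \<theta>)"
      using gi by (simp add: c_def field_simps)
    finally show ?thesis by simp
  qed
  have e3: "(\<Sum>h\<in>S. (if mid (f h) then V h * (1 - \<theta> / w (f h)) else 0))
      \<le> (\<Sum>q\<in>{i+1..s}. real (n q) * (gw q - \<theta>))"
  proof -
    have nn: "0 \<le> (if mid (f h) then V h * (1 - \<theta> / w (f h)) else 0)" if "h \<in> {1..m}" for h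
      using aux2[of "V h" \<theta> "w (f h)"] vnn[OF that] wpos[OF fA[OF that]] th
      by (auto simp: mid_def)
    have "(\<Sum>h\<in>S. (if mid (f h) then V h * (1 - \<theta> / w (f h)) else 0))
        \<le> (\<Sum>h\<in>{1..m}. (if mid (f h) then V h * (1 - \<theta> / w (f h)) else 0))"
      by (rule sum_mono2) (use t nn in \<open>auto simp: S_def\<close>)
    also have "\<dots> = (\<Sum>h\<in>{h\<in>{1..m}. mid (f h)}. V h * (1 - \<theta> / w (f h)))"
      by (rule sum.inter_filter[symmetric]) simp
    also have "\<dots> = (\<Sum>b\<in>{b\<in>A. mid b}. \<Sum>h\<in>{h\<in>{1..m}. f h = b}. V h * (1 - \<theta> / w (f h)))"
      by (rule regroup)
    also have "\<dots> = (\<Sum>b\<in>{b\<in>A. mid b}. (1 - \<theta> / w b) * (\<Sum>h\<in>{h\<in>{1..m}. f h = b}. V h))"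
      by (auto intro!: sum.cong simp: sum_distrib_left mult.commute)
    also have "\<dots> \<le> (\<Sum>b\<in>{b\<in>A. mid b}. (1 - \<theta> / w b) * w b)"
    proof (rule sum_mono)
      fix b assume b: "b \<in> {b\<in>A. mid b}"
      have "0 \<le> 1 - \<theta> / w b" using b th wpos[of b] by (auto simp: mid_def)
      then show "(1 - \<theta> / w b) * (\<Sum>h\<in>{h\<in>{1..m}. f h = b}. V h) \<le> (1 - \<theta> / w b) * w b"
        using b cost by (auto intro: mult_left_mono)
    qed
    also have "\<dots> = (\<Sum>b\<in>{b\<in>A. mid b}. w b - \<theta>)"
    proof (rule sum.cong)
      fix b assume "b \<in> {b\<in>A. mid b}"
      then have "w b > 0" using wpos by auto
      then show "(1 - \<theta> / w b) * w b = w b - \<theta>" by (simp add: field_simps)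
    qed simp
    also have "\<dots> = (\<Sum>b\<in>{b\<in>A. w b \<in> gw ` {i+1..s}}. w b - \<theta>)"
      using set_mid[OF s1] by (simp add: mid_def)
    also have "\<dots> = (\<Sum>q\<in>{i+1..s}. real (n q) * (gw q - \<theta>))"
      using group_sum[of "{i+1..s}" "\<lambda>x. x - \<theta>"] s by auto
    finally show ?thesis .
  qed
  show ?thesis using main e1 e2 e3 unfolding S_def by linarith
qed

lemma cumulT: "cumul A w gw i s = real (T s)"
  by (simp add: cumul_def T_def Lnat)

lemma T_mono: "s \<le> s' \<Longrightarrow> T s \<le> T s'"
  unfolding T_def by (auto intro!: sum_mono2)

lemma Ti: "real (T i) = Lval A w gw i + n i"
  by (simp add: T_def Lnat)

lemma T_split: "i \<le> s \<Longrightarrow> real (T s) = real (T i) + (\<Sum>q\<in>{i+1..s}. real (n q))"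
  unfolding T_def by (simp add: sum.atLeast_Suc_atMost)

lemma VS1: "h \<le> T i \<Longrightarrow> vstar A w gw k i h = gw i"
  by (simp add: vstar_def cumulT)

lemma VS2: "T k < h \<Longrightarrow> vstar A w gw k i h = 0"
proof -
  assume h: "T k < h"
  have "T i \<le> T k" using i T_mono by auto
  then show ?thesis using h by (simp add: vstar_def cumulT)
qed

lemma VS3: "s \<in> {i+1..k} \<Longrightarrow> T (s-1) < h \<Longrightarrow> h \<le> T s \<Longrightarrow> vstar A w gw k i h = gw s"
proof -
  assume s: "s \<in> {i+1..k}" and h: "T (s-1) < h" "h \<le> T s"
  have "T i \<le> T (s-1)" "T s \<le> T k" using s T_mono by auto
  then have "vstar A w gw k i h = gw (THE s. s \<in> {i+1..k} \<and> cumul A w gw i (s-1) < real h \<and> real h \<le> cumul A w gw i s)"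
    using h by (simp add: vstar_def cumulT)
  also have "(THE s. s \<in> {i+1..k} \<and> cumul A w gw i (s-1) < real h \<and> real h \<le> cumul A w gw i s) = s"
  proof (rule the_equality)
    show "s \<in> {i+1..k} \<and> cumul A w gw i (s-1) < real h \<and> real h \<le> cumul A w gw i s"
      using s h by (simp add: cumulT)
  next
    fix s' assume "s' \<in> {i+1..k} \<and> cumul A w gw i (s'-1) < real h \<and> real h \<le> cumul A w gw i s'"
    then have s': "s' \<in> {i+1..k}" "T (s'-1) < h" "h \<le> T s'" by (auto simp: cumulT)
    show "s' = s"
    proof (rule ccontr)
      assume "s' \<noteq> s"
      then consider "s' \<le> s - 1" | "s \<le> s' - 1" using s s' by linarith
      then show False
      proof cases
        case 1 then show ?thesis using T_mono[OF 1] h s' by linarith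
      next
        case 2 then show ?thesis using T_mono[OF 2] h s' by linarith
      qed
    qed
  qed
  finally show ?thesis .
qed

lemma block: "d \<le> T i \<Longrightarrow> i + j \<le> k \<Longrightarrow>
   (\<Sum>h\<in>{d+1..T (i+j)}. vstar A w gw k i h) = (real (T i) - real d) * gw i + (\<Sum>q\<in>{i+1..i+j}. real (n q) * gw q)"
proof (induction j)
  case 0
  have "(\<Sum>h\<in>{d+1..T i}. vstar A w gw k i h) = (\<Sum>h\<in>{d+1..T i}. gw i)"
    by (rule sum.cong) (auto intro: VS1)
  then show ?case using 0 by (simp add: of_nat_diff)
next
  case (Suc j)
  have TS: "T (i + Suc j) = T (i+j) + n (Suc (i+j))" by (simp add: T_def)
  have "(\<Sum>h\<in>{d+1..T (i + Suc j)}. vstar A w gw k i h)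
     = (\<Sum>h\<in>{d+1..T (i+j)}. vstar A w gw k i h) + (\<Sum>h\<in>{T (i+j)+1..T (i + Suc j)}. vstar A w gw k i h)"
    by (rule sum_split_ivl) (use Suc.prems T_mono[of i "i+j"] T_mono[of "i+j" "i + Suc j"] in auto)
  also have "(\<Sum>h\<in>{T (i+j)+1..T (i + Suc j)}. vstar A w gw k i h) = (\<Sum>h\<in>{T (i+j)+1..T (i + Suc j)}. gw (Suc (i+j)))"
  proof (rule sum.cong)
    fix h assume "h \<in> {T (i+j)+1..T (i + Suc j)}"
    then show "vstar A w gw k i h = gw (Suc (i+j))"
      using VS3[of "Suc (i+j)" h] Suc.prems by auto
  qed simp
  also have "\<dots> = real (n (Suc (i+j))) * gw (Suc (i+j))" using TS by simp
  finally show ?case using Suc by simp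
qed

theorem main_loc: "d < t \<Longrightarrow> t \<le> m \<Longrightarrow> (\<Sum>h\<in>{d+1..t}. V h) \<le> (\<Sum>h\<in>{d+1..t}. vstar A w gw k i h)"
proof -
  assume t: "d < t" "t \<le> m"
  have dTi: "d \<le> T i" using d_le_Ti Ti by simp
  have ik: "i \<le> k" using i by auto
  consider "t \<le> T i" | "T k < t" | "T i < t" "t \<le> T k" by linarith
  then show ?thesis
  proof cases
    case 1
    show ?thesis
    proof (rule sum_mono)
      fix h assume h: "h \<in> {d+1..t}"
      then show "V h \<le> vstar A w gw k i h" using above_d[of h] VS1[of h] t 1 by auto
    qed
  next
    case 2
    have low: "\<forall>b\<in>A. w b < gw k \<longrightarrow> w b \<le> 0"
    proof (intro ballI impI)
      fix b assume b: "b \<in> A" "w b < gw k"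
      then have "w b \<in> gw ` {1..k}" using groups b(1) by blast
      then obtain q where "q \<in> {1..k}" "w b = gw q" by auto
      then show "w b \<le> 0" using b decr'[of k q] ik i by auto
    qed
    have "(\<Sum>h\<in>{d+1..t}. V h) \<le> 0 * (real t - real d) + (Lval A w gw i + n i - real d) * (gw i - 0)
           + (\<Sum>q\<in>{i+1..k}. real (n q) * (gw q - 0))"
      by (rule bound) (use ik low t gwpos[of k] i in auto)
    also have "\<dots> = (\<Sum>h\<in>{d+1..T (i + (k - i))}. vstar A w gw k i h)"
      using block[OF dTi, of "k - i"] ik Ti by simp
    also have "\<dots> = (\<Sum>h\<in>{d+1..T k}. vstar A w gw k i h)" using ik by simp
    also have "\<dots> = (\<Sum>h\<in>{d+1..t}. vstar A w gw k i h)"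
    proof -
      have z: "(\<Sum>h\<in>{T k+1..t}. vstar A w gw k i h) = 0"
        by (rule sum.neutral) (auto intro: VS2)
      show ?thesis
        using sum_split_ivl[of d "T k" t "vstar A w gw k i"] dTi T_mono[OF ik] 2 z by simp
    qed
    finally show ?thesis by simp
  next
    case 3
    define s where "s = Max {s'\<in>{i..k}. T s' < t}"
    have fin: "finite {s'\<in>{i..k}. T s' < t}" by auto
    have "s \<in> {s'\<in>{i..k}. T s' < t}" unfolding s_def by (rule Max_in[OF fin]) (use 3 ik in auto)
    then have s: "s \<in> {i..k}" "T s < t" by auto
    have "s \<noteq> k" using s 3 by auto
    then have sk: "Suc s \<le> k" using s by auto
    have "\<not> Suc s \<le> s" by simp
    then have "Suc s \<notin> {s'\<in>{i..k}. T s' < t}" unfolding s_def using Max_ge[OF fin] by blast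
    then have tS: "t \<le> T (Suc s)" using sk s by auto
    have s1: "s \<in> {1..k}" using s i by auto
    have S1: "Suc s \<in> {1..k}" using sk by auto
    have th: "gw (Suc s) \<le> gw s" using decr'[OF S1 s1] by simp
    have low: "\<forall>b\<in>A. w b < gw s \<longrightarrow> w b \<le> gw (Suc s)"
    proof (intro ballI impI)
      fix b assume b: "b \<in> A" "w b < gw s"
      then have "w b \<in> gw ` {1..k}" using groups b(1) by blast
      then obtain q where q: "q \<in> {1..k}" "w b = gw q" by auto
      then have "s < q" using b decr'[OF s1 q(1)] by auto
      then show "w b \<le> gw (Suc s)" using q decr'[OF q(1) S1] by auto
    qed
    have "(\<Sum>h\<in>{d+1..t}. V h) \<le> gw (Suc s) * (real t - real d) + (Lval A w gw i + n i - real d) * (gw i - gw (Suc s))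
           + (\<Sum>q\<in>{i+1..s}. real (n q) * (gw q - gw (Suc s)))"
      by (rule bound) (use s th low t gwpos[OF S1] in auto)
    also have "\<dots> = (\<Sum>h\<in>{d+1..T (i + (s - i))}. vstar A w gw k i h) + gw (Suc s) * (real t - real (T s))"
    proof -
      have "(\<Sum>q\<in>{i+1..s}. real (n q) * (gw q - gw (Suc s)))
          = (\<Sum>q\<in>{i+1..s}. real (n q) * gw q) - gw (Suc s) * (\<Sum>q\<in>{i+1..s}. real (n q))"
        by (simp add: algebra_simps sum_subtractf sum_distrib_left)
      then show ?thesis
        using block[OF dTi, of "s - i"] s T_split[of s] Ti by (simp add: algebra_simps)
    qed
    also have "(\<Sum>h\<in>{d+1..T (i + (s - i))}. vstar A w gw k i h) = (\<Sum>h\<in>{d+1..T s}. vstar A w gw k i h)"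
      using s by simp
    also have "gw (Suc s) * (real t - real (T s)) = (\<Sum>h\<in>{T s+1..t}. vstar A w gw k i h)"
    proof -
      have "(\<Sum>h\<in>{T s+1..t}. vstar A w gw k i h) = (\<Sum>h\<in>{T s+1..t}. gw (Suc s))"
      proof (rule sum.cong)
        fix h assume "h \<in> {T s+1..t}"
        then show "vstar A w gw k i h = gw (Suc s)" using VS3[of "Suc s" h] sk s tS by auto
      qed simp
      then show ?thesis using s by (simp add: of_nat_diff)
    qed
    also have "(\<Sum>h\<in>{d+1..T s}. vstar A w gw k i h) + (\<Sum>h\<in>{T s+1..t}. vstar A w gw k i h)
        = (\<Sum>h\<in>{d+1..t}. vstar A w gw k i h)"
      by (rule sum_split_ivl[symmetric]) (use dTi T_mono[of i s] s in auto)
    finally show ?thesis .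
  qed
qed

end

theorem mainTheorem9:
  fixes A :: "'ag set" and w :: "'ag \<Rightarrow> real" and v :: "'ag \<Rightarrow> nat \<Rightarrow> real"
    and m k :: nat and gw :: "nat \<Rightarrow> real" and i :: nat and a :: 'ag
  assumes canon: "canonical A w v m"
    and groups: "w ` A = gw ` {1..k}"
    and decr: "\<forall>p\<in>{1..k}. \<forall>q\<in>{1..k}. p < q \<longrightarrow> gw q < gw p"
    and i: "i \<in> {1..k}"
    and a: "a \<in> A" "w a = gw i"
  shows "\<forall>t::nat. Max ({0} \<union> {h\<in>{1..m}. v a h > gw i}) < t \<and> t \<le> m \<longrightarrow>
           (\<Sum>h\<in>{Max ({0} \<union> {h\<in>{1..m}. v a h > gw i}) + 1..t}. v a h)
             \<le> (\<Sum>h\<in>{Max ({0} \<union> {h\<in>{1..m}. v a h > gw i}) + 1..t}. vstar A w gw k i h)"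
proof -
  have finA: "finite A" and Ane: "A \<noteq> {}" and wpos: "\<And>b. b \<in> A \<Longrightarrow> w b > 0"
    and vnn: "\<And>h. h \<in> {1..m} \<Longrightarrow> v a h \<ge> 0"
    and vmono: "\<And>h1 h2. h1 \<in> {1..m} \<Longrightarrow> h2 \<in> {1..m} \<Longrightarrow> h1 \<le> h2 \<Longrightarrow> v a h2 \<le> v a h1"
    and pw: "\<And>b. b \<in> A \<Longrightarrow> \<exists>p::nat. w b = Max (w ` A) / 2 ^ p"
    and wm: "WMMS A w v m a = w a"
    using canon a unfolding canonical_def by blast+
  define M where "M = Max (w ` A)"
  define F where "F = {1..m} \<rightarrow>\<^sub>E A"
  define g where "g = (\<lambda>f. Max ((\<lambda>b. bundle_cost v a m f b / w b) ` A))"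
  have finF: "finite F" unfolding F_def using finA by (simp add: finite_PiE)
  have Fne: "F \<noteq> {}" unfolding F_def using Ane by (simp add: PiE_eq_empty_iff)
  have "w a * Min (g ` F) = w a" using wm unfolding WMMS_def g_def F_def by simp
  then have "Min (g ` F) = 1" using wpos[OF a(1)] by simp
  moreover have "Min (g ` F) \<in> g ` F" using finF Fne by (intro Min_in) auto
  ultimately obtain f where f: "f \<in> F" "g f = 1" by force
  have fA: "\<And>h. h \<in> {1..m} \<Longrightarrow> f h \<in> A" using f(1) unfolding F_def by (auto dest: PiE_mem)
  have cost: "(\<Sum>h\<in>{h\<in>{1..m}. f h = b}. v a h) \<le> w b" if b: "b \<in> A" for b
  proof -
    have "bundle_cost v a m f b / w b \<le> g f" unfolding g_def using finA b by (intro Max_ge) auto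
    then have "bundle_cost v a m f b / w b \<le> 1" using f by simp
    then show ?thesis using wpos[OF b] by (simp add: bundle_cost_def divide_le_eq)
  qed
  have gwM: "\<exists>p::nat. gw q = M / 2 ^ p" if q: "q \<in> {1..k}" for q
  proof -
    have "gw q \<in> w ` A" using groups q by auto
    then show ?thesis using pw unfolding M_def by auto
  qed
  define P where "P q = (SOME p::nat. gw q = M / 2 ^ p)" for q
  have P: "gw q = M / 2 ^ P q" if "q \<in> {1..k}" for q
    unfolding P_def using someI_ex[OF gwM[OF that]] .
  have Mpos: "M > 0" unfolding M_def using finA a wpos[OF a(1)]
    by (smt (verit, best) Max_ge finite_imageI image_eqI)
  define Ln where "Ln = (\<Sum>q\<in>{1..<i}. group_size A w gw q * 2 ^ (P i - P q))"
  have Lnat: "Lval A w gw i = real Ln"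
  proof -
    have "Lval A w gw i = (\<Sum>q\<in>{1..<i}. real (group_size A w gw q) * (gw q / gw i))"
      unfolding Lval_def by (simp add: sum_divide_distrib)
    also have "\<dots> = (\<Sum>q\<in>{1..<i}. real (group_size A w gw q) * 2 ^ (P i - P q))"
    proof (rule sum.cong)
      fix q assume q: "q \<in> {1..<i}"
      then have q1: "q \<in> {1..k}" using i by auto
      have "gw i < gw q" using decr q1 i q by auto
      then have "M / 2 ^ P i < M / 2 ^ P q" using P[OF q1] P[OF i] by simp
      then have lt: "P q < P i"
      proof (rule contrapos_pp)
        assume "\<not> P q < P i"
        then have "(2::real) ^ P i \<le> 2 ^ P q" by simp
        then show "\<not> M / 2 ^ P i < M / 2 ^ P q" using Mpos
          by (simp add: divide_left_mono not_less)
      qed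
      have "gw q / gw i = (M / 2 ^ P q) / (M / 2 ^ P i)" using P[OF q1] P[OF i] by simp
      also have "\<dots> = (2::real) ^ P i / 2 ^ P q" using Mpos by (simp add: field_simps)
      also have "\<dots> = 2 ^ (P i - P q)" using lt by (simp add: power_diff)
      finally show "real (group_size A w gw q) * (gw q / gw i) = real (group_size A w gw q) * 2 ^ (P i - P q)" by simp
    qed simp
    also have "\<dots> = real Ln" unfolding Ln_def by simp
    finally show ?thesis .
  qed
  interpret setting A w "v a" m k gw i f Ln
    by unfold_locales (use finA wpos vnn vmono groups decr i fA cost Lnat in auto)
  show ?thesis using main_loc unfolding d_def by blast
qed

end
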